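(* Let $\beta\in(0,1/e)$, $\Phi$ as in the context, and $\varepsilon(x)=1/\log\Phi(x)$. Then for every $x>0$, $$\sum_{k=1}^{\infty}\varepsilon\left(E^k(x)\right)=\infty.$$
   Context: $E(x)=e^x$ and $E^k$ is its $k$-th iterate. For $\beta\in(0,1/e)$ let $E_\beta(z)=e^{\beta z}$; it has a repelling real fixed point $\xi>0$ with multiplier $\lambda=\beta\xi>1$. $\Phi$ is the unique local holomorphic solution of $\Phi(E_\beta(z))=\lambda\Phi(z)$ near $\xi$ with $\Phi(\xi)=0$, $\Phi'(\xi)=1$, extended to $[\xi,\infty)$ so that the equation holds there; it is increasing and tends to $\infty$. *)

theory Defs
  imports "HOL-Complex_Analysis.Complex_Analysis"
begin

text \<open>The Koenigs-type linearizer of E_beta(z) = exp(beta z) at its repelling real fixed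
  point xi (multiplier lambda = beta xi > 1), restricted to [xi, infinity), as in the paper:
  it agrees near xi with a local holomorphic solution F of F(E_beta z) = lambda F z
  normalized by F xi = 0, F' xi = 1, it satisfies the functional equation on [xi,inf),
  it is increasing and tends to infinity.\<close>
definition is_Phi :: "real \<Rightarrow> real \<Rightarrow> (real \<Rightarrow> real) \<Rightarrow> bool" where
  "is_Phi \<beta> \<xi> \<Phi> \<longleftrightarrow>
     \<xi> > 0 \<and> exp (\<beta> * \<xi>) = \<xi> \<and> \<beta> * \<xi> > 1 \<and>
     (\<exists>r>0. \<exists>F. F holomorphic_on ball (complex_of_real \<xi>) r \<and>
        F (complex_of_real \<xi>) = 0 \<and> deriv F (complex_of_real \<xi>) = 1 \<and>
        (\<forall>z\<in>ball (complex_of_real \<xi>) r. exp (complex_of_real \<beta> * z) \<in> ball (complex_of_real \<xi>) r \<longrightarrow>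
            F (exp (complex_of_real \<beta> * z)) = complex_of_real (\<beta> * \<xi>) * F z) \<and>
        (\<forall>x\<in>{\<xi>..<\<xi>+r}. F (complex_of_real x) = complex_of_real (\<Phi> x))) \<and>
     (\<forall>x\<ge>\<xi>. \<Phi> (exp (\<beta> * x)) = (\<beta> * \<xi>) * \<Phi> x) \<and>
     strict_mono_on {\<xi>..} \<Phi> \<and>
     filterlim \<Phi> at_top at_top"

definition eps_fun :: "(real \<Rightarrow> real) \<Rightarrow> real \<Rightarrow> real" where
  "eps_fun \<Phi> x = 1 / ln (\<Phi> x)"

end

theory Submission
  imports Defs "HOL-Real_Asymp.Real_Asymp"
begin
lemma div_lemma:
  fixes f :: "nat \<Rightarrow> real" and C :: real
  assumes C: "C > 0" and hf: "\<And>k. k \<ge> N \<Longrightarrow> f k \<ge> 1 / (C * (real k + 1))"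
  shows "filterlim (\<lambda>n. \<Sum>k=1..n. f k) at_top sequentially"
proof -
  define h where "h k = 1 / (C * (real k + 1))" for k
  define g where "g k = min 0 (f k - h k)" for k
  define D where "D = (\<Sum>k=1..N. g k)"
  have gnp: "g k \<le> 0" for k by (simp add: g_def)
  have g0: "k \<ge> N \<Longrightarrow> g k = 0" for k using hf[of k] by (simp add: g_def h_def)
  have Dle: "D \<le> (\<Sum>k=1..n. g k)" for n
  proof (cases "n \<le> N")
    case True
    have "(\<Sum>k=1..n. - g k) \<le> (\<Sum>k=1..N. - g k)"
      using True gnp by (intro sum_mono2) (auto simp: g_def)
    then show ?thesis unfolding D_def by (simp add: sum_negf)
  next
    case False
    have "(\<Sum>k=1..n. g k) = (\<Sum>k=1..N. g k)"
      using False g0 by (intro sum.mono_neutral_right) auto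
    then show ?thesis unfolding D_def by simp
  qed
  have hb: "(\<Sum>k=1..n. h k) \<ge> ln (real n + 1) / (2*C)" for n
  proof -
    have "(\<Sum>k=1..n. h k) \<ge> (\<Sum>k=1..n. inverse (real k) / (2*C))"
    proof (intro sum_mono)
      fix k assume "k \<in> {1..n}"
      hence k: "real k \<ge> 1" by auto
      have "inverse (real k) / (2*C) = 1 / (C * (2 * real k))" using C k by (simp add: field_simps)
      also have "\<dots> \<le> 1 / (C * (real k + 1))" using C k
        by (intro divide_left_mono mult_left_mono mult_pos_pos) auto
      finally show "inverse (real k) / (2*C) \<le> h k" by (simp add: h_def)
    qed
    also have "(\<Sum>k=1..n. inverse (real k) / (2*C)) = harm n / (2*C)"
      by (simp add: harm_def sum_divide_distrib)
    finally show ?thesis using ln_le_harm[of n] C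
      by (smt (verit) divide_right_mono)
  qed
  have lb: "D + ln (real n + 1) / (2*C) \<le> (\<Sum>k=1..n. f k)" for n
  proof -
    have "(\<Sum>k=1..n. f k) \<ge> (\<Sum>k=1..n. g k + h k)"
      by (intro sum_mono) (auto simp: g_def)
    also have "(\<Sum>k=1..n. g k + h k) = (\<Sum>k=1..n. g k) + (\<Sum>k=1..n. h k)" by (simp add: sum.distrib)
    finally show ?thesis using Dle[of n] hb[of n] by linarith
  qed
  have "filterlim (\<lambda>n. D + ln (real n + 1) / (2*C)) at_top sequentially"
    using C by real_asymp
  then show ?thesis
    by (rule filterlim_at_top_mono) (use lb in auto)
qed

lemma exp_dom:
  fixes \<beta> y :: real assumes b: "\<beta> > 0" and y: "y \<ge> 4 / \<beta>^3" "y \<ge> 0"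
  shows "y \<le> \<beta> * exp (\<beta> * y)"
proof -
  have e: "exp (\<beta>*y) = exp (\<beta>*y/2)^2" by (simp add: power2_eq_square flip: exp_add)
  have "\<beta>*y/2 \<le> exp (\<beta>*y/2)" using exp_ge_add_one_self[of "\<beta>*y/2"] by linarith
  moreover have "0 \<le> \<beta>*y/2" using b y by simp
  ultimately have "(\<beta>*y/2)^2 \<le> exp (\<beta>*y)" unfolding e by (intro power_mono) auto
  hence "\<beta> * (\<beta>*y/2)^2 \<le> \<beta> * exp (\<beta>*y)" using b by simp
  moreover have "y \<le> \<beta> * (\<beta>*y/2)^2"
  proof -
    have "4 \<le> \<beta>^3 * y" using y b by (simp add: field_simps)
    hence "y * 4 \<le> y * (\<beta>^3 * y)" using y by (intro mult_left_mono) auto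
    thus ?thesis by (simp add: power2_eq_square power3_eq_cube algebra_simps)
  qed
  ultimately show ?thesis by linarith
qed

theorem lemma4p7:
  fixes \<beta> \<xi> :: real and \<Phi> :: "real \<Rightarrow> real" and x :: real
  assumes "0 < \<beta>" "\<beta> < 1 / exp 1"
    and "is_Phi \<beta> \<xi> \<Phi>"
    and "x > 0"
  shows "filterlim (\<lambda>n. \<Sum>k=1..n. eps_fun \<Phi> ((exp ^^ k) x)) at_top sequentially"
proof -
  note b = assms(1)
  have xi: "\<xi> > 0" and fixp: "exp (\<beta> * \<xi>) = \<xi>" and lam: "\<beta> * \<xi> > 1"
    and FE: "\<And>y. y \<ge> \<xi> \<Longrightarrow> \<Phi> (exp (\<beta> * y)) = (\<beta> * \<xi>) * \<Phi> y"
    and sm: "strict_mono_on {\<xi>..} \<Phi>" and lim: "filterlim \<Phi> at_top at_top"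
    using assms(3) unfolding is_Phi_def by auto
  define l where "l = \<beta> * \<xi>"
  have l1: "l > 1" using lam by (simp add: l_def)
  have Pmono: "\<xi> \<le> u \<Longrightarrow> u \<le> v \<Longrightarrow> \<Phi> u \<le> \<Phi> v" for u v
    by (rule strict_mono_on_leD[OF sm]) auto
  define a where "a k = (exp ^^ k) x" for k
  have aS: "a (Suc k) = exp (a k)" for k by (simp add: a_def)
  have age: "a k \<ge> real k" for k
  proof (induction k)
    case 0 then show ?case using assms(4) by (simp add: a_def)
  next
    case (Suc k) then show ?case using exp_ge_add_one_self[of "a k"] by (simp add: aS; linarith)
  qed
  have amono: "k \<le> m \<Longrightarrow> a k \<le> a m" for k m
  proof (induction m rule: dec_induct)
    case (step m) then show ?case using exp_ge_add_one_self[of "a m"] by (simp add: aS; linarith)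
  qed simp
  define EB where "EB y = exp (\<beta> * y)" for y
  have EBmono: "u \<le> v \<Longrightarrow> EB u \<le> EB v" for u v using b by (simp add: EB_def)
  have it: "y \<ge> \<xi> \<Longrightarrow> (EB^^j) y \<ge> \<xi> \<and> \<Phi> ((EB^^j) y) = l^j * \<Phi> y" for j y
  proof (induction j)
    case 0 then show ?case by simp
  next
    case (Suc j)
    hence h: "(EB^^j) y \<ge> \<xi>" by simp
    have "EB ((EB^^j) y) \<ge> EB \<xi>" using EBmono[OF h] .
    moreover have "EB \<xi> = \<xi>" using fixp by (simp add: EB_def)
    moreover have "\<Phi> (EB ((EB^^j) y)) = l * \<Phi> ((EB^^j) y)" using FE[OF h] by (simp add: EB_def l_def)
    ultimately show ?case using Suc by simp
  qed
  define T where "T = max \<xi> (4 / \<beta>^3)"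
  define K where "K = nat \<lceil>T\<rceil>"
  have aK: "a k \<ge> T" if "k \<ge> K" for k
  proof -
    have "T \<le> real K" unfolding K_def by linarith
    also have "\<dots> \<le> real k" using that by simp
    finally show ?thesis using age[of k] by linarith
  qed
  define T0 where "T0 = a K"
  have T0xi: "T0 \<ge> \<xi>" using aK[of K] by (simp add: T0_def T_def)
  have cmp: "(EB^^(2*i)) T0 \<ge> a (K+i)" for i
  proof (induction i)
    case 0 then show ?case by (simp add: T0_def)
  next
    case (Suc i)
    have "(EB^^(2*Suc i)) T0 = EB (EB ((EB^^(2*i)) T0))" by simp
    also have "\<dots> \<ge> EB (EB (a (K+i)))" using Suc by (intro EBmono)
    finally have 1: "(EB^^(2*Suc i)) T0 \<ge> EB (EB (a (K+i)))" .
    have aT: "a (K+i) \<ge> T" using aK by simp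
    hence "a (K+i) \<le> \<beta> * exp (\<beta> * a (K+i))"
      using b xi by (intro exp_dom) (auto simp: T_def)
    hence "exp (a (K+i)) \<le> EB (EB (a (K+i)))" by (simp add: EB_def)
    with 1 show ?case by (simp add: aS)
  qed
  have Pb: "\<Phi> (a (K+i)) \<le> l^(2*i) * \<Phi> T0" for i
  proof -
    have "a (K+i) \<ge> \<xi>" using aK[of "K+i"] by (simp add: T_def)
    hence "\<Phi> (a (K+i)) \<le> \<Phi> ((EB^^(2*i)) T0)" using cmp[of i] by (intro Pmono)
    also have "\<dots> = l^(2*i) * \<Phi> T0" using it[OF T0xi] by simp
    finally show ?thesis .
  qed
  have alim: "filterlim a at_top sequentially"
    by (rule filterlim_at_top_mono[OF filterlim_real_sequentially]) (use age in auto)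
  have "filterlim (\<lambda>k. \<Phi> (a k)) at_top sequentially"
    using filterlim_compose[OF lim alim] .
  hence "eventually (\<lambda>k. \<Phi> (a k) \<ge> exp 1) sequentially"
    by (simp add: filterlim_at_top)
  then obtain N0 where N0: "\<And>k. k \<ge> N0 \<Longrightarrow> \<Phi> (a k) \<ge> exp 1"
    by (auto simp: eventually_sequentially)
  define C where "C = 2 * ln l + \<bar>ln (\<Phi> T0)\<bar> + 1"
  have lnl: "ln l > 0" using l1 by simp
  have C: "C > 0" unfolding C_def using lnl by simp
  have main: "eps_fun \<Phi> (a k) \<ge> 1 / (C * (real k + 1))" if k: "k \<ge> max N0 K" for k
  proof -
    define i where "i = k - K"
    have ki: "k = K + i" using k by (simp add: i_def)
    have e: "\<Phi> (a k) \<ge> exp 1" using N0 k by simp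
    have pos: "\<Phi> (a k) > 0" using e by (smt (verit) exp_gt_zero)
    have ln1: "ln (\<Phi> (a k)) \<ge> 1" using e pos by (metis ln_exp ln_le_cancel_iff exp_gt_zero)
    have P: "\<Phi> (a k) \<le> l^(2*i) * \<Phi> T0" using Pb[of i] ki by simp
    have lp: "l^(2*i) > 0" using l1 by simp
    have PT0: "\<Phi> T0 > 0" using P pos lp by (smt (verit) zero_less_mult_pos)
    have "ln (\<Phi> (a k)) \<le> ln (l^(2*i) * \<Phi> T0)" using P pos by simp
    also have "\<dots> = real (2*i) * ln l + ln (\<Phi> T0)"
      using lp PT0 l1 by (simp add: ln_mult ln_realpow)
    also have "\<dots> \<le> C * (real k + 1)"
    proof -
      have "real (2*i) * ln l \<le> 2 * ln l * real k" using ki lnl by simp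
      also have "\<dots> \<le> 2 * ln l * real k + (\<bar>ln (\<Phi> T0)\<bar> + 1) * real k" by simp
      finally have h: "real (2*i) * ln l \<le> 2 * ln l * real k + (\<bar>ln (\<Phi> T0)\<bar> + 1) * real k" .
      have "C * (real k + 1) = 2 * ln l * real k + (\<bar>ln (\<Phi> T0)\<bar> + 1) * real k + C"
        unfolding C_def by (simp add: algebra_simps)
      moreover have "ln (\<Phi> T0) \<le> C" unfolding C_def using lnl abs_ge_self[of "ln (\<Phi> T0)"] by linarith
      ultimately show ?thesis using h by linarith
    qed
    finally have "ln (\<Phi> (a k)) \<le> C * (real k + 1)" .
    thus ?thesis unfolding eps_fun_def using ln1
      by (intro divide_left_mono) auto
  qed
  show ?thesis
    using div_lemma[OF C, of "max N0 K" "\<lambda>k. eps_fun \<Phi> (a k)"] main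
    by (simp add: a_def)
qed
end
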